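(* Let $k>1$ and $l>0$ be integers and let $t,t'$ be non-negative integers. Then there exists a positive integer $x$ such that the $k$-adic expansion $xl=\sum_{q=1}^{r}s_{xl,q}k^{w_{xl}(q)}$ (with $1\le s_{xl,q}\le k-1$ and $0\le w_{xl}(1)<w_{xl}(2)<\dots$) has at least two terms, $s_{xl,1}=1$ and $w_{xl}(2)-w_{xl}(1)>t$. Moreover, there exists a positive integer $X$ such that the $k$-adic expansion $Xl=\sum_{q}s_{Xl,q}k^{w_{Xl}(q)}$ has at least two terms, $s_{Xl,1}=1$, $w_{Xl}(2)-w_{Xl}(1)>t'$, and $w_{Xl}(1)=w_{xl}(1)$.
   Context: The $k$-adic expansion of a positive integer $m$ is the unique representation $m=\sum_{q=1}^{r}s_{m,q}k^{w_m(q)}$ with digits $1\le s_{m,q}\le k-1$ and exponents $0\le w_m(1)<w_m(2)<\dots<w_m(r)$. *)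

theory Defs
  imports Main
begin

text \<open>The k-adic expansion of a positive integer m: m = sum_{q=1}^r s_{m,q} k^{w_m(q)}
  with digits 1 <= s_{m,q} <= k-1 and strictly increasing exponents.
  The exponents are exactly the positions of the nonzero base-k digits.\<close>

definition kdigit :: "nat \<Rightarrow> nat \<Rightarrow> nat \<Rightarrow> nat" where
  "kdigit k m i = (m div k ^ i) mod k"

definition kadic_exps :: "nat \<Rightarrow> nat \<Rightarrow> nat list" where
  "kadic_exps k m = sorted_list_of_set {i. kdigit k m i \<noteq> 0}"

definition kadic_len :: "nat \<Rightarrow> nat \<Rightarrow> nat" where
  "kadic_len k m = length (kadic_exps k m)"

text \<open>w_m(q), for 1 <= q <= r (1-indexed as in the paper)\<close>
definition kadic_w :: "nat \<Rightarrow> nat \<Rightarrow> nat \<Rightarrow> nat" where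
  "kadic_w k m q = kadic_exps k m ! (q - 1)"

definition kadic_s :: "nat \<Rightarrow> nat \<Rightarrow> nat \<Rightarrow> nat" where
  "kadic_s k m q = kdigit k m (kadic_w k m q)"

end

theory Submission
  imports Defs
begin

fun ff :: "nat \<Rightarrow> nat \<Rightarrow> nat \<Rightarrow> nat" where
  "ff k n 0 = 0"
| "ff k n (Suc N) = 1 + k^n * ff k n N"

lemma pow_dvd_mod0:
  fixes k :: nat
  assumes "0 < e"
  shows "k^e * z mod k = 0"
proof -
  have "k dvd k^e" using assms by (simp add: dvd_power)
  hence "k dvd k^e * z" by simp
  thus ?thesis by simp
qed

lemma one_plus_div:
  fixes m :: nat
  assumes "1 < m"
  shows "(1 + m * c) div m = c"
proof -
  have "(1 + m * c) div m = c + 1 div m" using assms by (intro div_mult_self2) simp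
  thus ?thesis using assms by simp
qed

lemma div_shift:
  fixes k :: nat
  assumes "k > 1" "n \<ge> 1"
  shows "(1 + k^n * y) div k^i mod k =
         (if i = 0 then 1 else if i < n then 0 else y div k^(i-n) mod k)"
proof (cases "i = 0")
  case True
  have "k^n = k * k^(n-1)" using assms
    by (cases n) auto
  hence "1 + k^n * y = 1 + (k^(n-1) * y) * k" by simp
  hence "(1 + k^n * y) mod k = (1 + (k^(n-1) * y) * k) mod k" by (rule arg_cong)
  also have "\<dots> = 1 mod k" by (rule mod_mult_self1)
  also have "\<dots> = 1" using assms by simp
  finally show ?thesis using True by simp
next
  case False
  have k1: "1 < k^i" using assms False one_less_power by blast
  show ?thesis
  proof (cases "i < n")
    case True
    have "k^n = k^i * k^(n-i)" using True by (simp flip: power_add)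
    hence "k^n * y = k^i * (k^(n-i) * y)" by simp
    hence "(1 + k^n * y) div k^i = (1 + k^i * (k^(n-i) * y)) div k^i" by (rule arg_cong)
    also have "\<dots> = k^(n-i) * y"
      using k1 by (rule one_plus_div)
    finally have "(1 + k^n * y) div k^i = k^(n-i) * y" .
    moreover have "k^(n-i) * y mod k = 0" using True by (simp add: pow_dvd_mod0)
    ultimately show ?thesis using False True by simp
  next
    case nl: False
    have kn: "1 < k^n" by (rule one_less_power) (use assms in auto)
    have "(1 + k^n * y) div k^n = y" using kn by (rule one_plus_div)
    moreover have "k^i = k^n * k^(i-n)" using nl by (simp flip: power_add)
    ultimately have "(1 + k^n * y) div k^i = y div k^(i-n)"
      by (simp add: div_mult2_eq)
    thus ?thesis using False nl by simp
  qed
qed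

lemma ff_digit:
  fixes k :: nat
  assumes "k > 1" "n \<ge> 1"
  shows "(ff k n N) div k^i mod k = (if i mod n = 0 \<and> i div n < N then 1 else 0)"
  using assms
proof (induction N arbitrary: i)
  case 0
  then show ?case by simp
next
  case (Suc N)
  have "ff k n (Suc N) div k^i mod k =
         (if i = 0 then 1 else if i < n then 0 else ff k n N div k^(i-n) mod k)"
    unfolding ff.simps by (rule div_shift[OF Suc.prems])
  also have "\<dots> = (if i mod n = 0 \<and> i div n < Suc N then 1 else 0)"
  proof (cases "i = 0")
    case True then show ?thesis by simp
  next
    case i0: False
    show ?thesis
    proof (cases "i < n")
      case True
      hence "i mod n \<noteq> 0" using i0 by simp
      thus ?thesis using True i0 by simp
    next
      case False
      define j where "j = i - n"
      have j: "i = j + n" using False by (simp add: j_def)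
      have n0: "n \<noteq> 0" using Suc.prems by simp
      have 1: "(i - n) mod n = i mod n" using j n0 by simp
      have 2: "i div n = Suc ((i - n) div n)" using j div_add_self2[OF n0, of j] by simp
      have 3: "(i - n) div n < N \<longleftrightarrow> i div n < Suc N" using 2 by simp
      show ?thesis using False i0 unfolding Suc.IH[OF Suc.prems, of "i-n"] 1 3 by simp
    qed
  qed
  finally show ?case .
qed

lemma shift_digit:
  fixes k :: nat
  assumes "k > 1"
  shows "(k^a * z) div k^i mod k = (if a \<le> i then z div k^(i-a) mod k else 0)"
proof (cases "a \<le> i")
  case True
  have "k^i = k^a * k^(i-a)" using True by (simp flip: power_add)
  hence "(k^a * z) div k^i = z div k^(i-a)" using assms
    by (simp add: div_mult2_eq)
  thus ?thesis using True by simp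
next
  case False
  have "k^a = k^i * k^(a-i)" using False by (simp flip: power_add)
  hence "k^a * z = k^i * (k^(a-i) * z)" by simp
  hence "(k^a * z) div k^i = (k^i * (k^(a-i) * z)) div k^i" by (rule arg_cong)
  also have "\<dots> = k^(a-i) * z" using assms by simp
  finally have "(k^a * z) div k^i = k^(a-i) * z" .
  moreover have "k^(a-i) * z mod k = 0" using False by (simp add: pow_dvd_mod0)
  ultimately show ?thesis using False by simp
qed


lemma exps_of:
  fixes k m a n N :: nat
  assumes "k > 1" "n \<ge> 1"
    and dig: "\<And>i. kdigit k m i = (if a \<le> i \<and> (i-a) mod n = 0 \<and> (i-a) div n < N then 1 else 0)"
  shows "kadic_exps k m = map (\<lambda>j. a + j*n) [0..<N]"
proof -
  have S: "{i. kdigit k m i \<noteq> 0} = set (map (\<lambda>j. a + j*n) [0..<N])"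
  proof (rule set_eqI, rule iffI)
    fix i assume "i \<in> {i. kdigit k m i \<noteq> 0}"
    hence h: "a \<le> i" "(i-a) mod n = 0" "(i-a) div n < N" using dig by (auto split: if_splits)
    have "i = a + ((i-a) div n) * n" using h div_mult_mod_eq[of "i-a" n] by simp
    thus "i \<in> set (map (\<lambda>j. a + j*n) [0..<N])" using h by (auto intro!: image_eqI)
  next
    fix i assume "i \<in> set (map (\<lambda>j. a + j*n) [0..<N])"
    then obtain j where j: "j < N" "i = a + j*n" by auto
    thus "i \<in> {i. kdigit k m i \<noteq> 0}" using dig assms(2) by simp
  qed
  have sd: "sorted (map (\<lambda>j. a + j*n) [0..<N])" "distinct (map (\<lambda>j. a + j*n) [0..<N])"
    using assms(2) by (auto simp: sorted_iff_nth_mono distinct_map inj_on_def)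
  have "sorted_list_of_set (set (map (\<lambda>j. a + j*n) [0..<N])) = map (\<lambda>j. a + j*n) [0..<N]"
    apply (subst sorted_list_of_set_sort_remdups)
    using sd by (simp only: distinct_remdups_id sorted_sort_id)
  thus ?thesis unfolding kadic_exps_def S .
qed

theorem lemma3p1:
  fixes k l t t' :: nat
  assumes "k > 1" and "l > 0"
  shows "\<exists>x::nat. x > 0 \<and> kadic_len k (x * l) \<ge> 2 \<and> kadic_s k (x * l) 1 = 1
           \<and> kadic_w k (x * l) 2 - kadic_w k (x * l) 1 > t
           \<and> (\<exists>X::nat. X > 0 \<and> kadic_len k (X * l) \<ge> 2 \<and> kadic_s k (X * l) 1 = 1
                \<and> kadic_w k (X * l) 2 - kadic_w k (X * l) 1 > t'
                \<and> kadic_w k (X * l) 1 = kadic_w k (x * l) 1)"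
proof -
  define T where "T = max t t'"
  have "\<not> inj (\<lambda>i::nat. k^i mod l)"
  proof
    assume inj: "inj (\<lambda>i::nat. k^i mod l)"
    have "range (\<lambda>i::nat. k^i mod l) \<subseteq> {..<l}" using assms by auto
    hence "finite (range (\<lambda>i::nat. k^i mod l))" using finite_subset by blast
    hence "finite (UNIV :: nat set)" using inj finite_imageD by blast
    thus False by simp
  qed
  then obtain i j where ij: "i \<noteq> j" "k^i mod l = k^j mod l" unfolding inj_def by blast
  obtain a b where ab: "a < b" "k^a mod l = k^b mod l"
  proof (cases "i < j")
    case True then show ?thesis using that ij by blast
  next
    case False then show ?thesis using that[of j i] ij by auto
  qed
  define d where "d = b - a"
  have d0: "d > 0" using ab d_def by simp
  have kd: "k^(a+d) mod l = k^a mod l" using ab d_def by simp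
  have per: "k^(a + j*d) mod l = k^a mod l" for j
  proof (induction j)
    case 0 then show ?case by simp
  next
    case (Suc j)
    have "k^(a + Suc j * d) = k^(a+d) * k^(j*d)" by (simp add: power_add algebra_simps)
    hence "k^(a + Suc j * d) mod l = (k^(a+d) mod l * k^(j*d)) mod l" by (simp add: mod_mult_left_eq)
    also have "\<dots> = (k^a mod l * k^(j*d)) mod l" using kd by simp
    also have "\<dots> = k^(a + j*d) mod l" by (simp add: mod_mult_left_eq power_add)
    finally show ?case using Suc by simp
  qed
  define n where "n = (T+1)*d"
  have "(T+1)*1 \<le> (T+1)*d" using d0 by (intro mult_le_mono2) simp
  hence n1: "n \<ge> 1" "n > T" using n_def by auto
  have kn: "k^(a+n) mod l = k^a mod l" using per[of "T+1"] n_def by (simp add: mult.commute)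
  have cong: "(k^a * ff k n N) mod l = (N * k^a) mod l" for N
  proof (induction N)
    case 0 then show ?case by simp
  next
    case (Suc N)
    have e: "k^a * ff k n (Suc N) = k^a + k^(a+n) * ff k n N" by (simp add: algebra_simps power_add)
    have "(k^(a+n) * ff k n N) mod l = (k^a * ff k n N) mod l"
      using kn by (rule mod_mult_cong) simp
    also have "\<dots> = (N * k^a) mod l" by (rule Suc)
    finally have "(k^a + k^(a+n) * ff k n N) mod l = (k^a + N * k^a) mod l"
      by (rule mod_add_cong[OF refl])
    hence "(k^a * ff k n (Suc N)) mod l = (k^a + N * k^a) mod l" by (simp only: e)
    thus ?case by simp
  qed
  define N where "N = 2*l"
  define m where "m = k^a * ff k n N"
  have "m mod l = 0" using cong[of N] unfolding m_def N_def by simp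
  hence ldvd: "l dvd m" by auto
  have N2: "N \<ge> 2" using assms N_def by simp
  have "ff k n N > 0" using N2 by (cases N) auto
  hence mpos: "m > 0" using assms m_def by simp
  define x where "x = m div l"
  have xl: "x * l = m" using ldvd x_def by simp
  have xpos: "x > 0" using xl mpos by (metis mult_0 neq0_conv)
  have dig: "kdigit k m i = (if a \<le> i \<and> (i-a) mod n = 0 \<and> (i-a) div n < N then 1 else 0)" for i
    unfolding kdigit_def m_def using shift_digit[OF assms(1)] ff_digit[OF assms(1) n1(1)] by simp
  have E: "kadic_exps k m = map (\<lambda>j. a + j*n) [0..<N]" by (rule exps_of[OF assms(1) n1(1) dig])
  have len: "kadic_len k m \<ge> 2" unfolding kadic_len_def E using N2 by simp
  have w1: "kadic_w k m 1 = a" unfolding kadic_w_def E using N2 by simp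
  have w2: "kadic_w k m 2 = a + n" unfolding kadic_w_def E using N2 by simp
  have s1: "kadic_s k m 1 = 1" unfolding kadic_s_def w1 using dig[of a] N2 by simp
  have gap: "kadic_w k m 2 - kadic_w k m 1 > T" using w1 w2 n1 by simp
  show ?thesis
    using xpos xl len s1 gap T_def by (intro exI[of _ x] conjI exI[of _ x]) auto
qed

end
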